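(* Let $\mathcal{H}$ be a finite-dimensional Hilbert space and let $\mathscr{N}:\mathcal{H}\to(-\infty,\infty]$ be feasible. Then $\mathscr{N}^{**}$ is feasible.
   Context: $\mathcal{H}$ is regarded as a real inner product space (if complex, with inner product $\mathrm{Re}\langle\cdot,\cdot\rangle$). A functional $\mathscr{N}:\mathcal{H}\to(-\infty,\infty]$ is proper if it is not identically $\infty$. It is called feasible if it is lower semi-continuous, proper, bounded below, and satisfies $\lim_{\|x\|\to\infty}\mathscr{N}(x)/\|x\|=\infty$. The Fenchel conjugate is $\mathscr{N}^*(y)=\sup_x \langle x,y\rangle-\mathscr{N}(x)$, and $\mathscr{N}^{**}=(\mathscr{N}^* )^*$ (the lower semi-continuous convex envelope of $\mathscr{N}$). *)

theory Defs
  imports "HOL-Analysis.Analysis"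
begin

definition lsc_fun :: "('a::topological_space \<Rightarrow> ereal) \<Rightarrow> bool" where
  "lsc_fun N \<longleftrightarrow> (\<forall>x. N x \<le> Liminf (at x) N)"

definition proper_fun :: "('a \<Rightarrow> ereal) \<Rightarrow> bool" where
  "proper_fun N \<longleftrightarrow> (\<forall>x. N x \<noteq> -\<infinity>) \<and> (\<exists>x. N x \<noteq> \<infinity>)"

definition bdd_below_fun :: "('a \<Rightarrow> ereal) \<Rightarrow> bool" where
  "bdd_below_fun N \<longleftrightarrow> (\<exists>c::real. \<forall>x. ereal c \<le> N x)"

definition supercoercive :: "('a::real_normed_vector \<Rightarrow> ereal) \<Rightarrow> bool" where
  "supercoercive N \<longleftrightarrow> ((\<lambda>x. N x / ereal (norm x)) \<longlongrightarrow> \<infinity>) at_infinity"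

definition feasible :: "('a::real_normed_vector \<Rightarrow> ereal) \<Rightarrow> bool" where
  "feasible N \<longleftrightarrow> lsc_fun N \<and> proper_fun N \<and> bdd_below_fun N \<and> supercoercive N"

definition fenchel_conj :: "('a::real_inner \<Rightarrow> ereal) \<Rightarrow> 'a \<Rightarrow> ereal" where
  "fenchel_conj N y = (SUP x. ereal (inner x y) - N x)"

end

theory Submission
  imports Defs
begin

lemma Sbound:
  fixes N :: "'a::euclidean_space \<Rightarrow> ereal"
  assumes sc: "supercoercive N" and c: "\<And>x. ereal c \<le> N x" and M: "M \<ge> 0"
  shows "\<exists>K\<ge>0. \<forall>y. norm y \<le> M \<longrightarrow> fenchel_conj N y \<le> ereal K"
proof -
  have "eventually (\<lambda>x. ereal (M+1) < N x / ereal (norm x)) at_infinity"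
    using sc unfolding supercoercive_def tendsto_PInfty by blast
  then obtain b where b: "\<And>x. b \<le> norm x \<Longrightarrow> ereal (M+1) < N x / ereal (norm x)"
    unfolding eventually_at_infinity by blast
  define R where "R = max b 1"
  define K where "K = max 0 (R*M - c)"
  have "fenchel_conj N y \<le> ereal K" if y: "norm y \<le> M" for y
    unfolding fenchel_conj_def
  proof (rule SUP_least)
    fix x
    have inn: "inner x y \<le> norm x * M"
      using norm_cauchy_schwarz[of x y] mult_left_mono[OF y norm_ge_zero[of x]] by linarith
    show "ereal (inner x y) - N x \<le> ereal K"
    proof (cases "N x")
      case (real n)
      show ?thesis
      proof (cases "R \<le> norm x")
        case True
        then have "b \<le> norm x" "norm x > 0" unfolding R_def by auto
        then have "ereal (M+1) < ereal (n / norm x)" using b[of x] real by simp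
        then have "(M+1) * norm x < n" using \<open>norm x > 0\<close> by (simp add: field_simps)
        moreover have "0 \<le> K" unfolding K_def by simp
        moreover have "0 \<le> norm x" by simp
        ultimately have "inner x y - n \<le> K" using inn by (simp only: distrib_right mult_1_left mult.commute[of M])
        then show ?thesis using real by simp
      next
        case False
        have "norm x * M \<le> R * M" using False M by (intro mult_right_mono) auto
        moreover have "c \<le> n" using c[of x] real by simp
        ultimately have "inner x y - n \<le> K" using inn unfolding K_def by linarith
        then show ?thesis using real by simp
      qed
    qed (use c[of x] in auto)
  qed
  then show ?thesis unfolding K_def by (intro exI[of _ K]) (auto simp: K_def)
qed

theorem proposition2:
  fixes N :: "'a::euclidean_space \<Rightarrow> ereal"
  assumes "feasible N"
  shows "feasible (fenchel_conj (fenchel_conj N))"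
proof -
  from assms have sc: "supercoercive N" and pr: "proper_fun N" and bb: "bdd_below_fun N"
    unfolding feasible_def by auto
  obtain c where c: "\<And>x. ereal c \<le> N x" using bb unfolding bdd_below_fun_def by auto
  obtain x0 where x0: "N x0 \<noteq> \<infinity>" using pr unfolding proper_fun_def by auto
  have nm: "\<And>x. N x \<noteq> -\<infinity>" using pr unfolding proper_fun_def by auto
  obtain n0 where n0: "N x0 = ereal n0" using x0 nm[of x0] by (cases "N x0") auto
  define S where "S = fenchel_conj N"
  define T where "T = fenchel_conj S"
  have young: "ereal (inner x y) - N x \<le> S y" for x y
    unfolding S_def fenchel_conj_def by (rule SUP_upper) simp
  have Slow: "ereal (inner x0 y - n0) \<le> S y" for y
    using young[of x0 y] n0 by simp
  have Sfin: "\<exists>s. S y = ereal s" for y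
  proof -
    obtain K where "\<forall>y'. norm y' \<le> norm y \<longrightarrow> S y' \<le> ereal K"
      using Sbound[OF sc c, of "norm y"] unfolding S_def by auto
    then have "S y \<le> ereal K" by auto
    then show ?thesis using Slow[of y] by (cases "S y") auto
  qed
  define s where "s y = real_of_ereal (S y)" for y
  have Ss: "S y = ereal (s y)" for y using Sfin[of y] unfolding s_def by auto
  have Tlow: "ereal (inner y z - s y) \<le> T z" for y z
  proof -
    have "ereal (inner y z) - S y \<le> T z"
      unfolding T_def fenchel_conj_def by (rule SUP_upper) simp
    then show ?thesis using Ss[of y] by simp
  qed
  have Tdef: "T z = (SUP y. ereal (inner y z - s y))" for z
    unfolding T_def fenchel_conj_def using Ss by simp
  have lsc: "lsc_fun T"
    unfolding lsc_fun_def
  proof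
    fix x
    show "T x \<le> Liminf (at x) T"
      unfolding le_Liminf_iff
    proof (intro allI impI)
      fix a assume "a < T x"
      then obtain y where ay: "a < ereal (inner y x - s y)"
        unfolding Tdef by (auto simp: less_SUP_iff)
      have "continuous (at x) (\<lambda>z. ereal (inner y z - s y))"
        by (intro continuous_intros)
      then have "((\<lambda>z. ereal (inner y z - s y)) \<longlongrightarrow> ereal (inner y x - s y)) (at x)"
        by (simp add: continuous_at)
      then have "eventually (\<lambda>z. a < ereal (inner y z - s y)) (at x)"
        using ay by (rule order_tendstoD)
      then show "eventually (\<lambda>z. a < T z) (at x)"
        by eventually_elim (use Tlow in \<open>blast intro: less_le_trans\<close>)
    qed
  qed
  have S0: "S 0 \<le> ereal (-c)"
    unfolding S_def fenchel_conj_def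
  proof (rule SUP_least)
    fix x show "ereal (inner x 0) - N x \<le> ereal (-c)"
      using c[of x] nm[of x] by (cases "N x") auto
  qed
  have Tlb: "ereal c \<le> T z" for z
  proof -
    have "ereal (inner 0 z - s 0) \<le> T z" by (rule Tlow)
    moreover have "s 0 \<le> -c" using S0 Ss[of 0] by simp
    then have "ereal c \<le> ereal (inner 0 z - s 0)" by simp
    ultimately show ?thesis by (rule order_trans[rotated])
  qed
  have TN: "T z \<le> N z" for z
    unfolding Tdef
  proof (rule SUP_least)
    fix y
    show "ereal (inner y z - s y) \<le> N z"
    proof (cases "N z")
      case (real n)
      then show ?thesis using young[of z y] Ss[of y] by (simp add: inner_commute)
    qed (use nm in auto)
  qed
  have proper: "proper_fun T"
    unfolding proper_fun_def
  proof
    show "\<forall>x. T x \<noteq> -\<infinity>" using Tlb by (metis MInfty_neq_ereal(1) ereal_infty_less_eq(2))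
    show "\<exists>x. T x \<noteq> \<infinity>" using TN[of x0] n0 by (intro exI[of _ x0]) auto
  qed
  have super: "supercoercive T"
    unfolding supercoercive_def tendsto_PInfty eventually_at_infinity
  proof
    fix r :: real
    define M where "M = max 0 (r + 1)"
    obtain K :: real where K0: "K \<ge> 0" and K: "\<And>y::'a. norm y \<le> M \<Longrightarrow> S y \<le> ereal K"
      using Sbound[OF sc c, of M] unfolding S_def M_def by auto
    show "\<exists>b. \<forall>z. b \<le> norm z \<longrightarrow> ereal r < T z / ereal (norm z)"
    proof (intro exI allI impI)
      fix z :: 'a assume zb: "K + 1 \<le> norm z"
      then have zp: "norm z > 0" using K0 by linarith
      define y where "y = (M / norm z) *\<^sub>R z"
      have ny: "norm y = M" using zp unfolding y_def M_def by simp
      have iy: "inner y z = M * norm z" using zp unfolding y_def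
        by (simp add: power2_norm_eq_inner[symmetric] power2_eq_square)
      have "s y \<le> K" using K[of y] ny Ss[of y] by simp
      then have low: "ereal (M * norm z - K) \<le> T z" using Tlow[of y z] iy
        by (metis diff_left_mono ereal_less_eq(3) order_trans)
      show "ereal r < T z / ereal (norm z)"
      proof (cases "T z")
        case (real t)
        have "M * norm z - K \<le> t" using low real by simp
        moreover have "K < norm z" using zb by linarith
        moreover have "r + 1 \<le> M" unfolding M_def by simp
        ultimately have "r * norm z < t"
          using zp mult_right_mono[of "r+1" M "norm z"] by (simp add: distrib_right)
        then have "r < t / norm z" using zp by (simp add: field_simps)
        then show ?thesis using real zp by simp
      next
        case PInf then show ?thesis using zp by simp
      next
        case MInf then show ?thesis using Tlb[of z] by simp
      qed
    qed
  qed
  show ?thesis unfolding feasible_def bdd_below_fun_def T_def[symmetric] S_def[symmetric]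
    using lsc proper super Tlb by auto
qed

end
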